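(* Let $\Omega\subset\mathbb{R}^n$ be a convex open set, let $f:\Omega\to\mathbb{R}$ be bounded, and let $\lambda>0$. Let $\underline f:\overline\Omega\to\mathbb{R}$ be given by $\underline f(x)=\liminf_{y\to x,\,y\in\Omega}f(y)$. Then for every $x\in\Omega$, $$C^l_{\lambda,\Omega}(f^{-}_{\overline\Omega})(x)\le C^l_{\lambda,\Omega}(f)(x)\le C^l_\lambda(f^\infty)(x)\le \underline f(x)\le f(x).$$
   Context: $f^{-}_{\overline\Omega}:\overline\Omega\to\mathbb{R}$ equals $f$ on $\Omega$ and $\inf_\Omega f$ on $\partial\Omega$. $f^\infty:\mathbb{R}^n\to\mathbb{R}\cup\{+\infty\}$ equals $f$ on $\Omega$ and $+\infty$ on $\mathbb{R}^n\setminus\Omega$. For a bounded function $g$ on $\overline\Omega$ and $x\in\overline\Omega$: $M_{\lambda,\Omega}(g)(x)=\inf_{y\in\overline\Omega}\{g(y)+\lambda|y-x|^2\}$, $M^{\lambda}_{\Omega}(g)(x)=\sup_{y\in\overline\Omega}\{g(y)-\lambda|y-x|^2\}$; for $f$ defined only on $\Omega$, $M_{\lambda,\Omega}(f)(x)=\inf_{y\in\Omega}\{f(y)+\lambda|y-x|^2\}$. Local lower transform: $C^l_{\lambda,\Omega}(g)(x)=M^{\lambda}_{\Omega}(M_{\lambda,\Omega}(g))(x)$ for $x\in\overline\Omega$. Global lower transform: $C^l_\lambda(g)(x)=\mathrm{co}[g+\lambda|\cdot|^2](x)-\lambda|x|^2$, where $\mathrm{co}$ is the convex envelope (largest convex function,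 possibly $+\infty$-valued, below the given function). *)

theory Defs
  imports "HOL-Analysis.Analysis" "HOL-Library.Extended_Real"
begin

text \<open>f^-_{closure Omega}: f on Omega, inf_Omega f elsewhere (only used on the closure).\<close>
definition fminus_cl :: "'a set \<Rightarrow> ('a \<Rightarrow> real) \<Rightarrow> 'a \<Rightarrow> real" where
  "fminus_cl \<Omega> f x = (if x \<in> \<Omega> then f x else Inf (f ` \<Omega>))"

definition finf :: "'a set \<Rightarrow> ('a \<Rightarrow> real) \<Rightarrow> 'a \<Rightarrow> ereal" where
  "finf \<Omega> f x = (if x \<in> \<Omega> then ereal (f x) else \<infinity>)"

definition lower_M :: "real \<Rightarrow> 'a::real_normed_vector set \<Rightarrow> ('a \<Rightarrow> real) \<Rightarrow> 'a \<Rightarrow> real" where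
  "lower_M lam S g x = Inf ((\<lambda>y. g y + lam * (norm (y - x))\<^sup>2) ` S)"

definition upper_M :: "real \<Rightarrow> 'a::real_normed_vector set \<Rightarrow> ('a \<Rightarrow> real) \<Rightarrow> 'a \<Rightarrow> real" where
  "upper_M lam S g x = Sup ((\<lambda>y. g y - lam * (norm (y - x))\<^sup>2) ` S)"

definition convex_ereal_fun :: "('a::real_vector \<Rightarrow> ereal) \<Rightarrow> bool" where
  "convex_ereal_fun \<phi> \<longleftrightarrow> convex {(x, t::real). \<phi> x \<le> ereal t}"

definition conv_env :: "('a::real_vector \<Rightarrow> ereal) \<Rightarrow> 'a \<Rightarrow> ereal" where
  "conv_env h x = (SUP \<phi> \<in> {\<phi>. convex_ereal_fun \<phi> \<and> (\<forall>y. \<phi> y \<le> h y)}. \<phi> x)"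

definition global_lower :: "real \<Rightarrow> ('a::real_normed_vector \<Rightarrow> ereal) \<Rightarrow> 'a \<Rightarrow> ereal" where
  "global_lower lam h x = conv_env (\<lambda>y. h y + ereal (lam * (norm y)\<^sup>2)) x - ereal (lam * (norm x)\<^sup>2)"

text \<open>Lower semicontinuous envelope (liminf as y \<rightarrow> x, y in Omega, y = x allowed).\<close>
definition lsc_env :: "'a::topological_space set \<Rightarrow> ('a \<Rightarrow> real) \<Rightarrow> 'a \<Rightarrow> ereal" where
  "lsc_env \<Omega> f x = Liminf (inf (nhds x) (principal \<Omega>)) (\<lambda>y. ereal (f y))"

end

theory Submission
  imports Defs
begin

lemma ineq4:
  fixes \<Omega> :: "'a::euclidean_space set" and f :: "'a \<Rightarrow> real"
  assumes "x \<in> \<Omega>"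
  shows "lsc_env \<Omega> f x \<le> ereal (f x)"
  unfolding lsc_env_def Liminf_def
proof (rule SUP_least)
  fix P assume "P \<in> {P. eventually P (inf (nhds x) (principal \<Omega>))}"
  then have "eventually (\<lambda>y. y \<in> \<Omega> \<longrightarrow> P y) (nhds x)"
    by (simp add: eventually_inf_principal)
  then have "P x" using assms eventually_nhds_x_imp_x by fastforce
  then show "(INF y\<in>Collect P. ereal (f y)) \<le> ereal (f x)"
    by (intro INF_lower) simp
qed

lemma ineq1:
  fixes \<Omega> :: "'a::euclidean_space set" and f :: "'a \<Rightarrow> real"
  assumes "bounded (f ` \<Omega>)" and "lam > 0" and "x \<in> \<Omega>"
  shows "upper_M lam (closure \<Omega>) (lower_M lam (closure \<Omega>) (fminus_cl \<Omega> f)) x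
           \<le> upper_M lam (closure \<Omega>) (lower_M lam \<Omega> f) x"
proof -
  have bb: "bdd_below (f ` \<Omega>)" using assms(1) by (rule bounded_imp_bdd_below)
  have fl: "Inf (f ` \<Omega>) \<le> f z" if "z \<in> \<Omega>" for z using bb that by (simp add: cInf_lower)
  have g12: "lower_M lam (closure \<Omega>) (fminus_cl \<Omega> f) y \<le> lower_M lam \<Omega> f y" for y
    unfolding lower_M_def
  proof (rule cInf_superset_mono)
    show "(\<lambda>ya. f ya + lam * (norm (ya - y))\<^sup>2) ` \<Omega> \<noteq> {}" using assms(3) by auto
    show "bdd_below ((\<lambda>ya. fminus_cl \<Omega> f ya + lam * (norm (ya - y))\<^sup>2) ` closure \<Omega>)"
    proof (rule bdd_belowI2[where m="Inf (f ` \<Omega>)"])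
      fix z
      have "Inf (f ` \<Omega>) \<le> fminus_cl \<Omega> f z" using fl by (simp add: fminus_cl_def)
      moreover have "0 \<le> lam * (norm (z - y))\<^sup>2" using assms(2) by simp
      ultimately show "Inf (f ` \<Omega>) \<le> fminus_cl \<Omega> f z + lam * (norm (z - y))\<^sup>2" by linarith
    qed
    show "(\<lambda>ya. f ya + lam * (norm (ya - y))\<^sup>2) ` \<Omega>
      \<subseteq> (\<lambda>ya. fminus_cl \<Omega> f ya + lam * (norm (ya - y))\<^sup>2) ` closure \<Omega>"
    proof (rule image_subsetI)
      fix z assume "z \<in> \<Omega>"
      then show "f z + lam * (norm (z - y))\<^sup>2
        \<in> (\<lambda>ya. fminus_cl \<Omega> f ya + lam * (norm (ya - y))\<^sup>2) ` closure \<Omega>"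
        using closure_subset by (intro image_eqI[of _ _ z]) (auto simp: fminus_cl_def)
    qed
  qed
  have g2x: "lower_M lam \<Omega> f y \<le> f x + lam * (norm (x - y))\<^sup>2" for y
    unfolding lower_M_def
  proof (rule cInf_lower)
    show "f x + lam * (norm (x - y))\<^sup>2 \<in> (\<lambda>ya. f ya + lam * (norm (ya - y))\<^sup>2) ` \<Omega>"
      using assms(3) by auto
    show "bdd_below ((\<lambda>ya. f ya + lam * (norm (ya - y))\<^sup>2) ` \<Omega>)"
    proof (rule bdd_belowI2[where m="Inf (f ` \<Omega>)"])
      fix z assume "z \<in> \<Omega>"
      then have "Inf (f ` \<Omega>) \<le> f z" using fl by simp
      moreover have "0 \<le> lam * (norm (z - y))\<^sup>2" using assms(2) by simp
      ultimately show "Inf (f ` \<Omega>) \<le> f z + lam * (norm (z - y))\<^sup>2" by linarith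
    qed
  qed
  show ?thesis unfolding upper_M_def
  proof (rule cSUP_mono)
    show "closure \<Omega> \<noteq> {}" using assms(3) closure_subset by auto
    show "bdd_above ((\<lambda>y. lower_M lam \<Omega> f y - lam * (norm (y - x))\<^sup>2) ` closure \<Omega>)"
    proof (rule bdd_aboveI2[where M="f x"])
      fix y show "lower_M lam \<Omega> f y - lam * (norm (y - x))\<^sup>2 \<le> f x"
        using g2x[of y] by (simp add: norm_minus_commute)
    qed
    fix n assume "n \<in> closure \<Omega>"
    then show "\<exists>m\<in>closure \<Omega>. lower_M lam (closure \<Omega>) (fminus_cl \<Omega> f) n - lam * (norm (n - x))\<^sup>2
        \<le> lower_M lam \<Omega> f m - lam * (norm (m - x))\<^sup>2"
      using g12[of n] by (intro bexI[of _ n]) auto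
  qed
qed


lemma affine_minorant:
  fixes \<Omega> :: "'a::euclidean_space set" and f :: "'a \<Rightarrow> real"
  assumes "lam > 0" and "x \<in> \<Omega>" and bnd: "bounded (f ` \<Omega>)"
  shows "ereal (lower_M lam \<Omega> f y - lam * (norm (y - x))\<^sup>2) \<le> global_lower lam (finf \<Omega> f) x"
proof -
  define c where "c = lower_M lam \<Omega> f y"
  define a where "a = (\<lambda>u. c - lam * (norm (y - u))\<^sup>2 + lam * (norm u)\<^sup>2)"
  have aeq: "a u = c - lam * (norm y)\<^sup>2 + (2 * lam) * (y \<bullet> u)" for u
    unfolding a_def by (simp add: power2_norm_eq_inner inner_diff_left inner_diff_right inner_commute algebra_simps)
  have cvx: "convex_ereal_fun (\<lambda>u. ereal (a u))"
    unfolding convex_ereal_fun_def convex_def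
  proof (intro ballI allI impI)
    fix p q :: "'a \<times> real" and s t :: real
    assume p: "p \<in> {(x, t). ereal (a x) \<le> ereal t}" and q: "q \<in> {(x, t). ereal (a x) \<le> ereal t}"
      and st: "0 \<le> s" "0 \<le> t" "s + t = 1"
    obtain u1 t1 where p': "p = (u1, t1)" by force
    obtain u2 t2 where q': "q = (u2, t2)" by force
    have h1: "a u1 \<le> t1" using p p' by simp
    have h2: "a u2 \<le> t2" using q q' by simp
    have e: "a (s *\<^sub>R u1 + t *\<^sub>R u2) = s * a u1 + t * a u2"
    proof -
      define C where "C = c - lam * (norm y)\<^sup>2"
      have C: "C = s * C + t * C" using st by (metis distrib_right mult_1)
      show ?thesis unfolding aeq C_def[symmetric]
        by (subst C) (simp add: inner_add_right algebra_simps)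
    qed
    have "s * a u1 \<le> s * t1" using h1 st by (simp add: mult_left_mono)
    moreover have "t * a u2 \<le> t * t2" using h2 st by (simp add: mult_left_mono)
    ultimately show "s *\<^sub>R p + t *\<^sub>R q \<in> {(x, t). ereal (a x) \<le> ereal t}"
      using e p' q' by simp
  qed
  have below: "ereal (a u) \<le> finf \<Omega> f u + ereal (lam * (norm u)\<^sup>2)" for u
  proof (cases "u \<in> \<Omega>")
    case True
    have "c \<le> f u + lam * (norm (u - y))\<^sup>2"
      unfolding c_def lower_M_def
    proof (rule cInf_lower)
      show "f u + lam * (norm (u - y))\<^sup>2 \<in> (\<lambda>ya. f ya + lam * (norm (ya - y))\<^sup>2) ` \<Omega>"
        using True by auto
      show "bdd_below ((\<lambda>ya. f ya + lam * (norm (ya - y))\<^sup>2) ` \<Omega>)"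
      proof (rule bdd_belowI2[where m="Inf (f ` \<Omega>)"])
        fix z assume "z \<in> \<Omega>"
        then have "Inf (f ` \<Omega>) \<le> f z" using bounded_imp_bdd_below[OF bnd] by (simp add: cInf_lower)
        moreover have "0 \<le> lam * (norm (z - y))\<^sup>2" using assms(1) by simp
        ultimately show "Inf (f ` \<Omega>) \<le> f z + lam * (norm (z - y))\<^sup>2" by linarith
      qed
    qed
    then show ?thesis using True by (simp add: finf_def a_def norm_minus_commute)
  next
    case False
    then show ?thesis by (simp add: finf_def)
  qed
  have "ereal (a x) \<le> conv_env (\<lambda>y. finf \<Omega> f y + ereal (lam * (norm y)\<^sup>2)) x"
    unfolding conv_env_def
    by (rule SUP_upper2[of "\<lambda>u. ereal (a u)"]) (use cvx below in auto)
  then show ?thesis unfolding global_lower_def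
    by (cases "conv_env (\<lambda>y. finf \<Omega> f y + ereal (lam * (norm y)\<^sup>2)) x")
      (auto simp: a_def c_def norm_minus_commute)
qed


lemma ineq2:
  fixes \<Omega> :: "'a::euclidean_space set" and f :: "'a \<Rightarrow> real"
  assumes "lam > 0" and "x \<in> \<Omega>" and bnd: "bounded (f ` \<Omega>)"
  shows "ereal (upper_M lam (closure \<Omega>) (lower_M lam \<Omega> f) x) \<le> global_lower lam (finf \<Omega> f) x"
proof -
  let ?G = "global_lower lam (finf \<Omega> f) x"
  have ne: "closure \<Omega> \<noteq> {}" using assms(2) closure_subset by auto
  have each: "ereal (lower_M lam \<Omega> f y - lam * (norm (y - x))\<^sup>2) \<le> ?G" for y
    by (rule affine_minorant[OF assms])
  show ?thesis
  proof (cases ?G)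
    case (real r)
    have "upper_M lam (closure \<Omega>) (lower_M lam \<Omega> f) x \<le> r"
      unfolding upper_M_def
      by (rule cSUP_least[OF ne]) (use each real in auto)
    then show ?thesis using real by simp
  next
    case PInf then show ?thesis by simp
  next
    case MInf then show ?thesis using each[of x] by simp
  qed
qed

lemma ineq3:
  fixes \<Omega> :: "'a::euclidean_space set" and f :: "'a \<Rightarrow> real"
  assumes "open \<Omega>" and "lam > 0" and "x \<in> \<Omega>" and bnd: "bounded (f ` \<Omega>)"
  shows "global_lower lam (finf \<Omega> f) x \<le> lsc_env \<Omega> f x"
  unfolding lsc_env_def le_Liminf_iff
proof (intro allI impI)
  fix c0 :: ereal
  assume c0: "c0 < global_lower lam (finf \<Omega> f) x"
  define h where "h = (\<lambda>y. finf \<Omega> f y + ereal (lam * (norm y)\<^sup>2))"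
  define L where "L = lam * (norm x)\<^sup>2"
  show "\<forall>\<^sub>F y in inf (nhds x) (principal \<Omega>). c0 < ereal (f y)"
  proof (cases c0)
    case MInf then show ?thesis by simp
  next
    case PInf then show ?thesis using c0 by simp
  next
    case (real c)
    have "ereal (c + L) < conv_env h x"
      using c0 real unfolding global_lower_def h_def L_def
      by (cases "conv_env (\<lambda>y. finf \<Omega> f y + ereal (lam * (norm y)\<^sup>2)) x") auto
    then obtain \<phi> where phic: "convex_ereal_fun \<phi>" and phih: "\<And>y. \<phi> y \<le> h y"
      and phix: "ereal (c + L) < \<phi> x"
      unfolding conv_env_def by (auto simp: less_SUP_iff)
    have hx: "h x = ereal (f x + L)" using assms(3) by (simp add: h_def finf_def L_def)
    obtain p where p: "\<phi> x = ereal p"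
      using phix phih[of x] hx by (cases "\<phi> x") auto
    have pcL: "c + L < p" using phix p by simp
    have pfx: "p \<le> f x + L" using phih[of x] hx p by simp
    obtain r where r: "r > 0" "ball x r \<subseteq> \<Omega>" using assms(1,3) open_contains_ball by blast
    obtain B where B: "\<And>z. z \<in> \<Omega> \<Longrightarrow> abs (f z) \<le> B"
      using bnd by (auto simp: bounded_iff)
    define M where "M = B + lam * (norm x + r)\<^sup>2"
    have hM: "\<phi> w \<le> ereal M" if "w \<in> ball x r" for w
    proof -
      have wO: "w \<in> \<Omega>" using that r by auto
      have "norm w \<le> norm x + r" using that norm_triangle_ineq[of x "w - x"]
        by (simp add: dist_norm norm_minus_commute)
      then have "(norm w)\<^sup>2 \<le> (norm x + r)\<^sup>2" by (simp add: power_mono)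
      then have "lam * (norm w)\<^sup>2 \<le> lam * (norm x + r)\<^sup>2" using assms(2) by simp
      moreover have "f w \<le> B" using B[OF wO] by simp
      ultimately have "f w + lam * (norm w)\<^sup>2 \<le> M" unfolding M_def by linarith
      then show ?thesis using phih[of w] wO by (simp add: h_def finf_def) (metis order.trans ereal_less_eq(3))
    qed
    have pM: "p \<le> M" using hM[of x] r p by simp
    define d where "d = p - c - L"
    have d: "d > 0" using pcL d_def by simp
    define t where "t = d / (4 * (M - p) + 4 * d)"
    have t0: "0 < t" using d pM unfolding t_def by simp
    have t1: "t \<le> 1/2" using d pM unfolding t_def by (simp add: field_simps)
    have tMp: "t * (M - p) < d / 4" using d pM unfolding t_def by (simp add: field_simps)
    have ev1: "\<forall>\<^sub>F y in nhds x. lam * (norm y)\<^sup>2 < L + d / 2"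
    proof -
      have "((\<lambda>y. lam * (norm y)\<^sup>2) \<longlongrightarrow> L) (nhds x)"
        unfolding L_def by (intro tendsto_intros) (rule filterlim_ident)
      then show ?thesis using d by (intro order_tendstoD) auto
    qed
    have ev2: "\<forall>\<^sub>F y in nhds x. norm (y - x) < t * r"
    proof -
      have "\<forall>\<^sub>F y in nhds x. y \<in> ball x (t * r)" using t0 r(1)
        by (intro eventually_nhds_in_open) auto
      then show ?thesis by eventually_elim (simp add: dist_norm norm_minus_commute)
    qed
    have "\<forall>\<^sub>F y in nhds x. y \<in> \<Omega> \<longrightarrow> c0 < ereal (f y)"
      using ev1 ev2
    proof eventually_elim
      case (elim y)
      show ?case
      proof
        assume yO: "y \<in> \<Omega>"
        define w where "w = x + ((1 - t) / t) *\<^sub>R (x - y)"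
        have xw: "(1 - t) *\<^sub>R y + t *\<^sub>R w = x"
        proof -
          have tt: "t * ((1 - t) / t) = 1 - t" using t0 by simp
          have "(1 - t) *\<^sub>R y + t *\<^sub>R w = (1 - t) *\<^sub>R y + t *\<^sub>R x + (t * ((1 - t) / t)) *\<^sub>R (x - y)"
            unfolding w_def by (simp add: scaleR_add_right)
          also have "\<dots> = x" unfolding tt by (simp add: algebra_simps)
          finally show ?thesis .
        qed
        have "norm (w - x) = ((1 - t) / t) * norm (x - y)"
          using t0 t1 unfolding w_def by simp
        also have "\<dots> < ((1 - t) / t) * (t * r)"
          using elim(2) t0 t1 by (intro mult_strict_left_mono) (auto simp: norm_minus_commute)
        also have "\<dots> \<le> r" using t0 t1 r(1) by (simp add: field_simps)
        finally have wb: "w \<in> ball x r" by (simp add: dist_norm norm_minus_commute)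
        have e1: "(y, f y + lam * (norm y)\<^sup>2) \<in> {(x, t). \<phi> x \<le> ereal t}"
          using phih[of y] yO by (simp add: h_def finf_def)
        have e2: "(w, M) \<in> {(x, t). \<phi> x \<le> ereal t}" using hM[OF wb] by simp
        have "(1 - t) *\<^sub>R (y, f y + lam * (norm y)\<^sup>2) + t *\<^sub>R (w, M) \<in> {(x, t). \<phi> x \<le> ereal t}"
          using phic unfolding convex_ereal_fun_def
          by (rule convexD) (use e1 e2 t0 t1 in auto)
        then have "p \<le> (1 - t) * (f y + lam * (norm y)\<^sup>2) + t * M"
          using xw p by simp
        then have "p - t * M \<le> (1 - t) * (f y + lam * (norm y)\<^sup>2)" by linarith
        moreover have "(1 - t) * (p - d / 2) \<le> p - t * M"
        proof -
          have dt: "d * t \<le> d * (1/2)" using t1 d by (intro mult_left_mono) auto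
          have e1: "(1 - t) * (p - d / 2) = p - t * p - d / 2 + d * t / 2" by (simp add: field_simps)
          have e2: "t * (M - p) = t * M - t * p" by (simp add: algebra_simps)
          show ?thesis unfolding e1 using tMp e2 dt by linarith
        qed
        ultimately have "(1 - t) * (p - d / 2) \<le> (1 - t) * (f y + lam * (norm y)\<^sup>2)" by linarith
        then have "p - d / 2 \<le> f y + lam * (norm y)\<^sup>2" using t1 by simp
        then have "c < f y" using elim(1) d_def by linarith
        then show "c0 < ereal (f y)" using real by simp
      qed
    qed
    then show ?thesis by (simp add: eventually_inf_principal)
  qed
qed

theorem proposition2p9:
  fixes \<Omega> :: "'a::euclidean_space set" and f :: "'a \<Rightarrow> real" and lam :: real and x :: 'a
  assumes "open \<Omega>" and "convex \<Omega>" and "bounded (f ` \<Omega>)" and "lam > 0" and "x \<in> \<Omega>"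
  shows "ereal (upper_M lam (closure \<Omega>) (lower_M lam (closure \<Omega>) (fminus_cl \<Omega> f)) x)
           \<le> ereal (upper_M lam (closure \<Omega>) (lower_M lam \<Omega> f) x)
       \<and> ereal (upper_M lam (closure \<Omega>) (lower_M lam \<Omega> f) x) \<le> global_lower lam (finf \<Omega> f) x
       \<and> global_lower lam (finf \<Omega> f) x \<le> lsc_env \<Omega> f x
       \<and> lsc_env \<Omega> f x \<le> ereal (f x)"
  using ineq1[OF assms(3,4,5)] ineq2[OF assms(4,5,3)] ineq3[OF assms(1,4,5,3)] ineq4[OF assms(5)]
  by simp

end
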